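(* Let $n\ge1$, $m\ge1$, $1\le j\le n$, and let $\Delta$ be the Newton polytope of $K^j_{n,m}=x_1^m+\dots+x_n^m+(x_1\cdots x_j)^{-1}$. For $0\le k\le nm$, $$W_\Delta(k)=\binom{n-1+k}{n-1}+\sum_{s=1}^j\beta(j,s)\sum_{\ell=1}^n\binom{k-\ell m+(n-j-1)}{n-s-1}+\alpha(j,k),$$ where $\beta(j,s)=\binom js$ except that $\beta(n,n)=0$; $\alpha(j,k)=0$ unless $j=n$ and $k$ is a positive multiple of $m$, in which case $\alpha(j,k)=1$; and binomial coefficients follow the convention $\binom ab=0$ whenever $a<b$ (in particular whenever $a<0$).
   Context: The Newton polytope $\Delta$ is the convex hull of $\vec0$, $-(e_1+\dots+e_j)$, and $me_1,\dots,me_n$; its denominator is $D(\Delta)=m$. The weight $w(u)$ of $u\in\mathbb{Q}^n$ is the least $c\in\mathbb Q_{\ge0}$ with $u\in c\Delta$ ($\infty$ if none), and $W_\Delta(k)=\#\{u\in\mathbb Z^n:w(u)=k/m\}$. *)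

theory Defs
  imports Complex_Main
begin

text \<open>Points of Q^n / R^n are modelled as functions nat => real, coordinate i
  (0-based, i < n) corresponding to the paper's coordinate x_(i+1); coordinates
  i >= n are 0.\<close>

definition delta_vertices :: "nat \<Rightarrow> nat \<Rightarrow> nat \<Rightarrow> (nat \<Rightarrow> real) set" where
  "delta_vertices n j m =
     {(\<lambda>_. 0), (\<lambda>i. if i < j then -1 else 0)} \<union>
     {(\<lambda>i. if i = k then real m else 0) | k. k < n}"

text \<open>x lies in c * Delta, where Delta is the convex hull of the vertices
  (for c >= 0 this is the set of nonnegative combinations with total weight c).\<close>
definition in_scaled_delta :: "nat \<Rightarrow> nat \<Rightarrow> nat \<Rightarrow> real \<Rightarrow> (nat \<Rightarrow> real) \<Rightarrow> bool" where
  "in_scaled_delta n j m c x \<longleftrightarrow>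
     (\<exists>\<mu> :: (nat \<Rightarrow> real) \<Rightarrow> real.
        (\<forall>v\<in>delta_vertices n j m. \<mu> v \<ge> 0) \<and>
        (\<Sum>v\<in>delta_vertices n j m. \<mu> v) = c \<and>
        x = (\<lambda>i. \<Sum>v\<in>delta_vertices n j m. \<mu> v * v i))"

definition has_weight :: "nat \<Rightarrow> nat \<Rightarrow> nat \<Rightarrow> (nat \<Rightarrow> real) \<Rightarrow> real \<Rightarrow> bool" where
  "has_weight n j m x c \<longleftrightarrow>
     c \<in> \<rat> \<and> c \<ge> 0 \<and> in_scaled_delta n j m c x \<and>
     (\<forall>c'. c' \<in> \<rat> \<and> c' \<ge> 0 \<and> in_scaled_delta n j m c' x \<longrightarrow> c \<le> c')"

definition W_Delta :: "nat \<Rightarrow> nat \<Rightarrow> nat \<Rightarrow> nat \<Rightarrow> nat" where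
  "W_Delta n j m k =
     card {u :: nat \<Rightarrow> int. (\<forall>i\<ge>n. u i = 0) \<and>
                has_weight n j m (\<lambda>i. of_int (u i)) (real k / real m)}"

definition binom :: "int \<Rightarrow> int \<Rightarrow> int" where
  "binom a b = (if a < b \<or> b < 0 then 0 else int (nat a choose nat b))"

definition beta :: "nat \<Rightarrow> nat \<Rightarrow> nat \<Rightarrow> int" where
  "beta n j s = (if j = n \<and> s = n then 0 else int (j choose s))"

definition alpha :: "nat \<Rightarrow> nat \<Rightarrow> nat \<Rightarrow> nat \<Rightarrow> int" where
  "alpha n m j k = (if j = n \<and> k > 0 \<and> m dvd k then 1 else 0)"

end

theory Submission
  imports Defs
begin


definition cset :: "nat set \<Rightarrow> nat \<Rightarrow> (nat \<Rightarrow> nat) set" where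
  "cset I t = {v. (\<forall>i. i \<notin> I \<longrightarrow> v i = 0) \<and> sum v I = t}"

lemma cset_empty: "cset {} t = (if t = 0 then {\<lambda>_. 0} else {})"
  by (auto simp: cset_def)

lemma cset_insert:
  assumes "finite I" "x \<notin> I"
  shows "cset (insert x I) t = (\<Union>r\<in>{..t}. (\<lambda>v. v(x:=r)) ` cset I (t - r))"
proof
  show "cset (insert x I) t \<subseteq> (\<Union>r\<in>{..t}. (\<lambda>v. v(x:=r)) ` cset I (t - r))"
  proof
    fix w assume w: "w \<in> cset (insert x I) t"
    have s: "sum w I = sum (w(x:=0)) I" using assms by (intro sum.cong) auto
    have "w x + sum w I = t" using w assms by (simp add: cset_def)
    hence "w(x:=0) \<in> cset I (t - w x)" using w s assms by (auto simp: cset_def)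
    moreover have "w = (w(x:=0))(x := w x)" by simp
    moreover have "w x \<in> {..t}" using \<open>w x + sum w I = t\<close> by simp
    ultimately show "w \<in> (\<Union>r\<in>{..t}. (\<lambda>v. v(x:=r)) ` cset I (t - r))" by blast
  qed
next
  show "(\<Union>r\<in>{..t}. (\<lambda>v. v(x:=r)) ` cset I (t - r)) \<subseteq> cset (insert x I) t"
  proof
    fix w assume "w \<in> (\<Union>r\<in>{..t}. (\<lambda>v. v(x:=r)) ` cset I (t - r))"
    then obtain r v where r: "r \<in> {..t}" and v: "v \<in> cset I (t - r)" and w: "w = v(x:=r)" by blast
    have s: "sum (v(x:=r)) I = sum v I" using assms by (intro sum.cong) auto
    show "w \<in> cset (insert x I) t" using v r s assms w by (auto simp: cset_def)
  qed
qed

lemma cset_count: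
  "finite I \<Longrightarrow> finite (cset I t) \<and>
     card (cset I t) = (if I = {} then (if t = 0 then 1 else 0) else (t + card I - 1) choose t)"
proof (induction I arbitrary: t rule: finite_induct)
  case empty
  then show ?case by (simp add: cset_empty)
next
  case (insert x I)
  have eq: "cset (insert x I) t = (\<Union>r\<in>{..t}. (\<lambda>v. v(x:=r)) ` cset I (t - r))"
    using cset_insert[OF insert(1,2)] .
  have inj: "inj_on (\<lambda>v. v(x:=r)) (cset I s)" for r s
  proof (rule inj_onI)
    fix v w assume "v \<in> cset I s" "w \<in> cset I s" "v(x:=r) = w(x:=r)"
    note h = this
    show "v = w"
    proof
      fix i show "v i = w i"
        using fun_cong[OF h(3), of i] h(1,2) insert(2) unfolding cset_def
        by (cases "i = x") auto
    qed
  qed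
  have fin: "finite (cset (insert x I) t)" unfolding eq using insert(3) by auto
  have disj: "\<forall>r\<in>{..t}. \<forall>r'\<in>{..t}. r \<noteq> r' \<longrightarrow>
      (\<lambda>v. v(x:=r)) ` cset I (t - r) \<inter> (\<lambda>v. v(x:=r')) ` cset I (t - r') = {}"
    by (fastforce dest: fun_cong[where x=x])
  have "card (cset (insert x I) t) = (\<Sum>r\<le>t. card ((\<lambda>v. v(x:=r)) ` cset I (t - r)))"
    unfolding eq using insert(3) disj by (intro card_UN_disjoint) auto
  also have "\<dots> = (\<Sum>r\<le>t. card (cset I (t - r)))"
    using inj by (intro sum.cong refl card_image) 
  also have "\<dots> = (if insert x I = {} then (if t = 0 then 1 else 0) else (t + card (insert x I) - 1) choose t)"
  proof (cases "I = {}")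
    case True
    then show ?thesis using insert(3) by (simp add: card_insert_if)
  next
    case False
    have "(\<Sum>r\<le>t. card (cset I (t - r))) = (\<Sum>r\<le>t. (t - r + card I - 1) choose (t - r))"
      using insert(3) False by simp
    also have "\<dots> = (\<Sum>q\<le>t. (card I - 1 + q) choose q)"
      using False insert(1) card_gt_0_iff[of I] apply - apply (rule sum.reindex_bij_witness[where i="\<lambda>q. t - q" and j="\<lambda>r. t - r"]) by (auto simp: add.commute Suc_diff_le)
    also have "\<dots> = Suc (card I - 1 + t) choose t" by (rule sum_choose_lower)
    also have "\<dots> = (t + card (insert x I) - 1) choose t"
    proof -
      have "card I > 0" using False insert(1) by (simp add: card_gt_0_iff)
      then show ?thesis using insert(1,2) by (simp add: add.commute)
    qed
    finally show ?thesis using False by simp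
  qed
  finally show ?case using fin by simp
qed



definition iset :: "nat set \<Rightarrow> (nat \<Rightarrow> int) \<Rightarrow> int \<Rightarrow> (nat \<Rightarrow> int) set" where
  "iset I lo t = {u. (\<forall>i. i \<notin> I \<longrightarrow> u i = 0) \<and> (\<forall>i\<in>I. lo i \<le> u i) \<and> sum u I = t}"

lemma binom_nat: "0 \<le> a \<Longrightarrow> 0 \<le> b \<Longrightarrow> binom a b = int (nat a choose nat b)"
  by (auto simp: binom_def)

lemma iset_count:
  assumes I: "finite I" "I \<noteq> {}"
  shows "finite (iset I lo t) \<and>
     int (card (iset I lo t)) = binom (t - sum lo I + int (card I) - 1) (int (card I) - 1)"
proof (cases "t - sum lo I < 0")
  case True
  have "iset I lo t = {}"
  proof (rule ccontr)
    assume "iset I lo t \<noteq> {}"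
    then obtain u where u: "u \<in> iset I lo t" by blast
    hence "sum lo I \<le> sum u I" by (intro sum_mono) (auto simp: iset_def)
    thus False using u True by (auto simp: iset_def)
  qed
  then show ?thesis using True by (simp add: binom_def)
next
  case False
  define D where "D = nat (t - sum lo I)"
  have D: "int D = t - sum lo I" using False by (simp add: D_def)
  define f where "f = (\<lambda>(v::nat\<Rightarrow>nat) i. if i \<in> I then lo i + int (v i) else 0)"
  define g where "g = (\<lambda>(u::nat\<Rightarrow>int) i. if i \<in> I then nat (u i - lo i) else 0)"
  have eq: "iset I lo t = f ` cset I D"
  proof
    show "iset I lo t \<subseteq> f ` cset I D"
    proof
      fix u assume u: "u \<in> iset I lo t"
      have "int (sum (g u) I) = (\<Sum>i\<in>I. u i - lo i)"
        unfolding of_nat_sum using u by (intro sum.cong) (auto simp: g_def iset_def)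
      also have "\<dots> = t - sum lo I" using u by (simp add: sum_subtractf iset_def)
      finally have "int (sum (g u) I) = int D" using D by simp
      hence "sum (g u) I = D" by (simp only: of_nat_eq_iff)
      hence "g u \<in> cset I D" by (auto simp: cset_def g_def)
      moreover have "u = f (g u)" using u by (auto simp: f_def g_def iset_def)
      ultimately show "u \<in> f ` cset I D" by blast
    qed
  next
    show "f ` cset I D \<subseteq> iset I lo t"
    proof
      fix u assume "u \<in> f ` cset I D"
      then obtain v where v: "v \<in> cset I D" and u: "u = f v" by blast
      have "sum u I = (\<Sum>i\<in>I. lo i + int (v i))" unfolding u f_def by (intro sum.cong) auto
      also have "\<dots> = sum lo I + int (sum v I)" by (simp add: sum.distrib of_nat_sum)
      also have "\<dots> = t" using v D by (simp add: cset_def)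
      finally show "u \<in> iset I lo t" by (auto simp: iset_def u f_def)
    qed
  qed
  have inj: "inj_on f (cset I D)"
  proof (rule inj_onI)
    fix v w assume h: "v \<in> cset I D" "w \<in> cset I D" "f v = f w"
    show "v = w"
    proof
      fix i show "v i = w i"
        using fun_cong[OF h(3), of i] h(1,2) unfolding cset_def f_def
        by (cases "i \<in> I") auto
    qed
  qed
  have cI: "card I > 0" using I by (simp add: card_gt_0_iff)
  have cc: "finite (cset I D) \<and> card (cset I D) = (D + card I - 1) choose D"
    using cset_count[OF I(1), of D] I(2) by simp
  have fin: "finite (iset I lo t)" using eq cc by simp
  have "card (iset I lo t) = (D + card I - 1) choose D" using eq cc inj by (simp add: card_image)
  also have "\<dots> = (D + card I - 1) choose (card I - 1)"
    using binomial_symmetric[of D "D + card I - 1"] cI by simp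
  finally have "int (card (iset I lo t)) = int ((D + card I - 1) choose (card I - 1))" by simp
  also have "\<dots> = binom (t - sum lo I + int (card I) - 1) (int (card I) - 1)"
  proof -
    have e1: "nat (t - sum lo I + int (card I) - 1) = D + card I - 1" using D cI by linarith
    have e2: "nat (int (card I) - 1) = card I - 1" using cI by linarith
    show ?thesis using D cI by (subst binom_nat) (auto simp: e1 e2)
  qed
  finally show ?thesis using fin by simp
qed



lemma binom_int: "binom (int a) (int b) = int (a choose b)"
  by (simp add: binom_def)

lemma ident:
  fixes n j :: nat and T :: int
  assumes n: "n \<ge> 1" and j: "1 \<le> j" "j \<le> n"
  shows "binom (T + int n - 1) (int n - 1) - binom (T - int j + int n - 1) (int n - 1) =
     (\<Sum>s=1..j. beta n j s * binom (T + (int n - int j - 1)) (int n - int s - 1))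
     + (if j = n \<and> T = 0 then 1 else 0)"
proof (cases "T < 0")
  case True
  have "binom (T + (int n - int j - 1)) (int n - int s - 1) = 0" if "s \<in> {1..j}" for s
    using that True by (simp add: binom_def)
  then show ?thesis using True by (simp add: binom_def)
next
  case False
  show ?thesis
  proof (cases "j = n \<and> T = 0")
    case True
    have bm: "binom (- 1) b = 0" for b by (simp add: binom_def, linarith)
    moreover have "binom (int n - 1) (int n - 1) = 1" using n by (simp add: binom_def)
    ultimately show ?thesis using True by (simp add: bm)
  next
    case nt: False
    define X where "X = T + (int n - int j - 1)"
    have X0: "X \<ge> 0" using False nt j unfolding X_def by linarith
    define N where "N = nat X"
    define r where "r = n - 1"
    have XN: "X = int N" using X0 by (simp add: N_def)
    have l1: "binom (T + int n - 1) (int n - 1) = int ((j + N) choose r)"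
    proof -
      have "T + int n - 1 = int (j + N)" using XN X_def by simp
      moreover have "int n - 1 = int r" using n r_def by simp
      ultimately have "binom (T + int n - 1) (int n - 1) = binom (int (j + N)) (int r)" by simp
      then show ?thesis by (simp only: binom_int)
    qed
    have l2: "binom (T - int j + int n - 1) (int n - 1) = int (N choose r)"
    proof -
      have "T - int j + int n - 1 = int N" using XN X_def by simp
      moreover have "int n - 1 = int r" using n r_def by simp
      ultimately have "binom (T - int j + int n - 1) (int n - 1) = binom (int N) (int r)" by simp
      then show ?thesis by (simp only: binom_int)
    qed
    define h where "h s = (if s \<le> r then int ((j choose s) * (N choose (r - s))) else 0)" for s
    have vd: "(\<Sum>k\<le>r. (j choose k) * (N choose (r - k))) = (j + N) choose r" by (rule vandermonde)
    have sp: "{..r} = insert 0 {1..r}" by auto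
    have "int ((j + N) choose r) = int (N choose r) + (\<Sum>s=1..r. int ((j choose s) * (N choose (r - s))))"
      unfolding vd[symmetric] sp by (simp add: of_nat_sum)
    also have "(\<Sum>s=1..r. int ((j choose s) * (N choose (r - s)))) = (\<Sum>s=1..r. h s)"
      by (intro sum.cong) (auto simp: h_def)
    also have "\<dots> = (\<Sum>s=1..n. h s)"
      by (rule sum.mono_neutral_left) (auto simp: h_def r_def)
    also have "\<dots> = (\<Sum>s=1..j. h s)"
      using j by (intro sum.mono_neutral_right) (auto simp: h_def)
    also have "\<dots> = (\<Sum>s=1..j. beta n j s * binom (T + (int n - int j - 1)) (int n - int s - 1))"
    proof (intro sum.cong refl)
      fix s assume s: "s \<in> {1..j}"
      show "h s = beta n j s * binom (T + (int n - int j - 1)) (int n - int s - 1)"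
      proof (cases "s \<le> r")
        case True
        have b: "beta n j s = int (j choose s)" using True n r_def by (auto simp: beta_def)
        have "int n - int s - 1 = int (r - s)" using True n r_def by simp
        hence "binom (T + (int n - int j - 1)) (int n - int s - 1) = binom (int N) (int (r - s))"
          using XN X_def by simp
        hence "binom (T + (int n - int j - 1)) (int n - int s - 1) = int (N choose (r - s))"
          by (simp only: binom_int)
        then show ?thesis using True b by (simp add: h_def)
      next
        case False
        then have "int n - int s - 1 < 0" using r_def by simp
        then show ?thesis using False by (simp add: h_def binom_def)
      qed
    qed
    finally show ?thesis using l1 l2 nt by simp
  qed
qed



definition Zv :: "nat \<Rightarrow> real" where "Zv = (\<lambda>_. 0)"
definition Jv :: "nat \<Rightarrow> nat \<Rightarrow> real" where "Jv j = (\<lambda>i. if i < j then -1 else 0)"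
definition Ev :: "nat \<Rightarrow> nat \<Rightarrow> nat \<Rightarrow> real" where "Ev m k = (\<lambda>i. if i = k then real m else 0)"

lemma dv_eq: "delta_vertices n j m = insert Zv (insert (Jv j) (Ev m ` {..<n}))"
  unfolding delta_vertices_def Zv_def Jv_def Ev_def by auto

lemma Ev_inj: "m \<ge> 1 \<Longrightarrow> Ev m k = Ev m k' \<longleftrightarrow> k = k'"
proof
  assume "m \<ge> 1" "Ev m k = Ev m k'"
  hence "Ev m k k = Ev m k' k" by simp
  thus "k = k'" using \<open>m \<ge> 1\<close> by (auto simp: Ev_def split: if_splits)
qed simp

lemma dv_sum:
  assumes "m \<ge> 1" "j \<ge> 1"
  shows "(\<Sum>v\<in>delta_vertices n j m. f v) = f Zv + f (Jv j) + (\<Sum>k<n. f (Ev m k))"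
proof -
  have z1: "Zv \<noteq> Jv j"
  proof
    assume "Zv = Jv j" hence "Zv 0 = Jv j 0" by simp
    thus False using assms by (simp add: Zv_def Jv_def)
  qed
  have z2: "Zv \<noteq> Ev m k" for k
  proof
    assume "Zv = Ev m k" hence "Zv k = Ev m k k" by simp
    thus False using assms by (simp add: Zv_def Ev_def)
  qed
  have z3: "Jv j \<noteq> Ev m k" for k
  proof
    assume "Jv j = Ev m k"
    hence "Jv j 0 = Ev m k 0" by simp
    thus False using assms unfolding Jv_def Ev_def by (auto split: if_splits)
  qed
  have inj: "inj_on (Ev m) {..<n}" using Ev_inj[OF assms(1)] by (auto intro: inj_onI)
  have "(\<Sum>v\<in>delta_vertices n j m. f v) = f Zv + (f (Jv j) + sum f (Ev m ` {..<n}))"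
  proof -
    have a1: "Zv \<notin> insert (Jv j) (Ev m ` {..<n})" using z1 z2 by auto
    have a2: "Jv j \<notin> Ev m ` {..<n}" using z3 by auto
    show ?thesis unfolding dv_eq using a1 a2 by (simp add: sum.insert)
  qed
  also have "sum f (Ev m ` {..<n}) = (\<Sum>k<n. f (Ev m k))" using inj by (simp add: sum.reindex)
  finally show ?thesis by (simp add: add.assoc)
qed

lemma sum_ind: "j \<le> n \<Longrightarrow> (\<Sum>i<n. if i < j then (c::real) else 0) = real j * c"
proof -
  assume "j \<le> n"
  have "(\<Sum>i<n. if i < j then c else 0) = sum (\<lambda>_. c) ({..<n} \<inter> {i. i<j}) + sum (\<lambda>_. 0) ({..<n} \<inter> - {i. i<j})"
    by (rule sum.If_cases) simp
  hence "(\<Sum>i<n. if i < j then c else 0) = (\<Sum>i\<in>{..<n} \<inter> {i. i < j}. c)"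
    by simp
  also have "{..<n} \<inter> {i. i < j} = {..<j}" using \<open>j \<le> n\<close> by auto
  finally show ?thesis by simp
qed

lemma comp:
  assumes "m \<ge> 1" "j \<ge> 1"
  shows "(\<Sum>v\<in>delta_vertices n j m. \<mu> v * v i) =
     (if i < j then - \<mu> (Jv j) else 0) + (if i < n then \<mu> (Ev m i) * real m else 0)"
proof -
  have "(\<Sum>k<n. \<mu> (Ev m k) * Ev m k i) = (\<Sum>k<n. if i = k then \<mu> (Ev m k) * real m else 0)"
    by (intro sum.cong) (auto simp: Ev_def)
  also have "\<dots> = (if i < n then \<mu> (Ev m i) * real m else 0)" by (simp add: sum.delta)
  finally show ?thesis using dv_sum[OF assms, of "\<lambda>v. \<mu> v * v i"] by (simp add: Zv_def Jv_def)
qed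

lemma sd_nonneg: "in_scaled_delta n j m c x \<Longrightarrow> c \<ge> 0"
  unfolding in_scaled_delta_def by (auto intro: sum_nonneg)

lemma sd_lower:
  assumes m: "m \<ge> 1" and j: "1 \<le> j" "j \<le> n" and sd: "in_scaled_delta n j m c x"
  shows "\<exists>A\<ge>0. (\<forall>i<j. x i + A \<ge> 0) \<and> (\<forall>i. j \<le> i \<and> i < n \<longrightarrow> x i \<ge> 0) \<and>
           c \<ge> ((\<Sum>i<n. x i) + real (m + j) * A) / real m"
proof -
  obtain \<mu> where nn: "\<forall>v\<in>delta_vertices n j m. \<mu> v \<ge> 0"
    and sc: "(\<Sum>v\<in>delta_vertices n j m. \<mu> v) = c"
    and xe: "x = (\<lambda>i. \<Sum>v\<in>delta_vertices n j m. \<mu> v * v i)"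
    using sd unfolding in_scaled_delta_def by blast
  define A where "A = \<mu> (Jv j)"
  have xi: "x i = (if i < j then - A else 0) + (if i < n then \<mu> (Ev m i) * real m else 0)" for i
    unfolding xe A_def using comp[OF m j(1)] by simp
  have A0: "A \<ge> 0" using nn by (simp add: A_def dv_eq)
  have B0: "\<mu> (Ev m i) \<ge> 0" if "i < n" for i using nn that by (simp add: dv_eq)
  have Z0: "\<mu> Zv \<ge> 0" using nn by (simp add: dv_eq)
  have c1: "\<forall>i<j. x i + A \<ge> 0" using xi B0 j by simp
  have c2: "\<forall>i. j \<le> i \<and> i < n \<longrightarrow> x i \<ge> 0" using xi B0 by simp
  have cs: "c = \<mu> Zv + A + (\<Sum>k<n. \<mu> (Ev m k))"
    using sc dv_sum[OF m j(1), of \<mu>] by (simp add: A_def)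
  have "(\<Sum>i<n. x i) = (\<Sum>i<n. (if i < j then - A else 0)) + (\<Sum>i<n. \<mu> (Ev m i) * real m)"
    unfolding xi by (simp add: sum.distrib)
  also have "\<dots> = - (real j * A) + real m * (\<Sum>i<n. \<mu> (Ev m i))"
    using sum_ind[OF j(2), of "-A"] by (simp add: sum_distrib_left mult.commute)
  finally have sx: "(\<Sum>i<n. x i) = - (real j * A) + real m * (\<Sum>i<n. \<mu> (Ev m i))" .
  have mpos: "real m > 0" using m by simp
  have "((\<Sum>i<n. x i) + real (m + j) * A) / real m = A + (\<Sum>i<n. \<mu> (Ev m i))"
    using mpos unfolding sx by (simp add: field_simps)
  also have "\<dots> \<le> c" using cs Z0 by simp
  finally show ?thesis using A0 c1 c2 by blast
qed

lemma sd_construct: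
  assumes m: "m \<ge> 1" and j: "1 \<le> j" "j \<le> n" and A0: "A \<ge> 0"
    and c1: "\<forall>i<j. x i + A \<ge> 0" and c2: "\<forall>i. j \<le> i \<and> i < n \<longrightarrow> x i \<ge> 0"
    and sup: "\<forall>i\<ge>n. x i = 0"
  shows "in_scaled_delta n j m (((\<Sum>i<n. x i) + real (m + j) * A) / real m) x"
proof -
  define \<mu> where "\<mu> v = (if v = Jv j then A else if v = Zv then 0 else
      (\<Sum>k<n. if v = Ev m k then (x k + (if k < j then A else 0)) / real m else 0))" for v
  have mpos: "real m > 0" using m by simp
  have z1: "Zv \<noteq> Jv j"
  proof
    assume "Zv = Jv j" hence "Zv 0 = Jv j 0" by simp
    thus False using j by (simp add: Zv_def Jv_def)
  qed
  have z2: "Ev m k \<noteq> Zv" for k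
  proof
    assume "Ev m k = Zv" hence "Zv k = Ev m k k" by simp
    thus False using m by (simp add: Zv_def Ev_def)
  qed
  have z3: "Ev m k \<noteq> Jv j" for k
  proof
    assume "Ev m k = Jv j"
    hence "Jv j 0 = Ev m k 0" by simp
    thus False using m j unfolding Jv_def Ev_def by (auto split: if_splits)
  qed
  have muJ: "\<mu> (Jv j) = A" by (simp add: \<mu>_def)
  have muZ: "\<mu> Zv = 0" using z1 by (simp add: \<mu>_def)
  have muE: "\<mu> (Ev m i) = (x i + (if i < j then A else 0)) / real m" if "i < n" for i
  proof -
    have "\<mu> (Ev m i) = (\<Sum>k<n. if i = k then (x k + (if k < j then A else 0)) / real m else 0)"
      using z2 z3 Ev_inj[OF m] unfolding \<mu>_def by simp
    also have "\<dots> = (x i + (if i < j then A else 0)) / real m" using that by (simp add: sum.delta)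
    finally show ?thesis .
  qed
  have nn: "\<forall>v\<in>delta_vertices n j m. \<mu> v \<ge> 0"
  proof
    fix v assume "v \<in> delta_vertices n j m"
    then consider "v = Zv" | "v = Jv j" | k where "k < n" "v = Ev m k" unfolding dv_eq by auto
    then show "\<mu> v \<ge> 0"
    proof cases
      case 1 then show ?thesis using muZ by simp
    next
      case 2 then show ?thesis using muJ A0 by simp
    next
      case (3 k)
      have "x k + (if k < j then A else 0) \<ge> 0" using c1 c2 3 by auto
      then show ?thesis using 3 muE mpos by simp
    qed
  qed
  have "(\<Sum>v\<in>delta_vertices n j m. \<mu> v) = A + (\<Sum>k<n. (x k + (if k < j then A else 0)) / real m)"
    using dv_sum[OF m j(1), of \<mu>] muJ muZ muE by simp
  also have "(\<Sum>k<n. (x k + (if k < j then A else 0)) / real m) = ((\<Sum>k<n. x k) + real j * A) / real m"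
    using sum_ind[OF j(2), of A] by (simp add: sum_divide_distrib[symmetric] sum.distrib)
  also have "A + ((\<Sum>k<n. x k) + real j * A) / real m = ((\<Sum>i<n. x i) + real (m + j) * A) / real m"
    using mpos by (simp add: field_simps)
  finally have s: "(\<Sum>v\<in>delta_vertices n j m. \<mu> v) = ((\<Sum>i<n. x i) + real (m + j) * A) / real m" .
  have xe: "x = (\<lambda>i. \<Sum>v\<in>delta_vertices n j m. \<mu> v * v i)"
  proof
    fix i
    show "x i = (\<Sum>v\<in>delta_vertices n j m. \<mu> v * v i)"
      unfolding comp[OF m j(1)] muJ using muE[of i] mpos sup j by (auto simp: field_simps)
  qed
  show ?thesis unfolding in_scaled_delta_def using nn s xe by blast
qed



definition aa :: "nat \<Rightarrow> (nat \<Rightarrow> int) \<Rightarrow> int" where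
  "aa j u = max 0 (- Min (u ` {..<j}))"

lemma aa_nonneg: "aa j u \<ge> 0" by (simp add: aa_def)

lemma aa_ge: "i < j \<Longrightarrow> u i + aa j u \<ge> 0"
proof -
  assume "i < j"
  hence "Min (u ` {..<j}) \<le> u i" by (intro Min_le) auto
  thus ?thesis by (simp add: aa_def)
qed

lemma aa_cases: "j \<ge> 1 \<Longrightarrow> aa j u = 0 \<or> (\<exists>i<j. u i = - aa j u)"
proof -
  assume "j \<ge> 1"
  hence "0 \<in> {..<j}" by simp
  hence "{..<j} \<noteq> {}" by blast
  hence "Min (u ` {..<j}) \<in> u ` {..<j}" by (intro Min_in) auto
  then obtain i where "i < j" "u i = Min (u ` {..<j})" by auto
  thus ?thesis by (auto simp: aa_def max_def)
qed

lemma aa_min: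
  assumes "j \<ge> 1" "A \<ge> 0" "\<forall>i<j. real_of_int (u i) + A \<ge> 0"
  shows "real_of_int (aa j u) \<le> A"
  using aa_cases[OF assms(1), of u] assms(2,3) by force

lemma hw_iff:
  assumes m: "m \<ge> 1" and j: "1 \<le> j" "j \<le> n" and sup: "\<forall>i\<ge>n. u i = 0"
  shows "has_weight n j m (\<lambda>i. of_int (u i)) (real k / real m) \<longleftrightarrow>
     (\<forall>i. j \<le> i \<and> i < n \<longrightarrow> 0 \<le> u i) \<and> (\<Sum>i<n. u i) + int (m + j) * aa j u = int k"
proof -
  define x where "x = (\<lambda>i. real_of_int (u i))"
  define Z where "Z = (\<Sum>i<n. u i) + int (m + j) * aa j u"
  define W where "W = ((\<Sum>i<n. x i) + real (m + j) * real_of_int (aa j u)) / real m"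
  have mpos: "real m > 0" using m by simp
  have WZ: "W = real_of_int Z / real m" unfolding W_def Z_def x_def by simp
  have WQ: "W \<in> \<rat>" unfolding WZ by (intro Rats_divide Rats_of_int Rats_of_nat)
  show ?thesis
  proof (cases "\<forall>i. j \<le> i \<and> i < n \<longrightarrow> 0 \<le> u i")
    case False
    have "\<not> in_scaled_delta n j m c x" for c
    proof
      assume "in_scaled_delta n j m c x"
      from sd_lower[OF m j this] have "\<forall>i. j \<le> i \<and> i < n \<longrightarrow> x i \<ge> 0" by blast
      thus False using False by (auto simp: x_def)
    qed
    then show ?thesis using False unfolding has_weight_def x_def by blast
  next
    case True
    have sdW: "in_scaled_delta n j m W x" unfolding W_def
    proof (rule sd_construct[OF m j])
      show "0 \<le> real_of_int (aa j u)" using aa_nonneg[of j u] by simp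
      show "\<forall>i<j. 0 \<le> x i + real_of_int (aa j u)" using aa_ge[of _ j u] unfolding x_def
        by (metis of_int_0_le_iff of_int_add)
      show "\<forall>i. j \<le> i \<and> i < n \<longrightarrow> 0 \<le> x i" using True by (simp add: x_def)
      show "\<forall>i\<ge>n. x i = 0" using sup by (simp add: x_def)
    qed
    have W0: "W \<ge> 0" using sd_nonneg[OF sdW] .
    have minW: "W \<le> c" if hc: "in_scaled_delta n j m c x" for c
    proof -
      obtain A where A: "A \<ge> 0" "\<forall>i<j. x i + A \<ge> 0"
        and cA: "c \<ge> ((\<Sum>i<n. x i) + real (m + j) * A) / real m"
        using sd_lower[OF m j hc] by blast
      have "real_of_int (aa j u) \<le> A" using aa_min[OF j(1) A(1)] A(2) by (simp add: x_def)
      hence "W \<le> ((\<Sum>i<n. x i) + real (m + j) * A) / real m"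
        unfolding W_def using mpos by (intro divide_right_mono add_left_mono mult_left_mono) auto
      thus ?thesis using cA by simp
    qed
    have "has_weight n j m x c \<longleftrightarrow> c = W" for c
    proof
      assume h: "has_weight n j m x c"
      hence "c \<le> W" using WQ W0 sdW unfolding has_weight_def by blast
      moreover have "W \<le> c" using h minW unfolding has_weight_def by blast
      ultimately show "c = W" by simp
    next
      assume "c = W"
      thus "has_weight n j m x c" using WQ W0 sdW minW unfolding has_weight_def by blast
    qed
    moreover have "real k / real m = W \<longleftrightarrow> int k = Z"
    proof -
      have "real k / real m = W \<longleftrightarrow> real_of_int (int k) = real_of_int Z"
        unfolding WZ using mpos by (simp add: divide_cancel_right)
      also have "\<dots> \<longleftrightarrow> int k = Z" by (simp only: of_int_eq_iff)
      finally show ?thesis .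
    qed
    ultimately show ?thesis using True unfolding x_def Z_def by auto
  qed
qed



lemma aa_eq_iff:
  assumes "j \<ge> 1"
  shows "aa j u = a \<longleftrightarrow> a \<ge> 0 \<and> (\<forall>i<j. u i + a \<ge> 0) \<and> (a = 0 \<or> (\<exists>i<j. u i = -a))"
proof
  assume "aa j u = a"
  thus "a \<ge> 0 \<and> (\<forall>i<j. u i + a \<ge> 0) \<and> (a = 0 \<or> (\<exists>i<j. u i = -a))"
    using aa_nonneg[of j u] aa_ge[of _ j u] aa_cases[OF assms, of u] by auto
next
  assume h: "a \<ge> 0 \<and> (\<forall>i<j. u i + a \<ge> 0) \<and> (a = 0 \<or> (\<exists>i<j. u i = -a))"
  have "aa j u \<le> a"
  proof -
    have "real_of_int (aa j u) \<le> real_of_int a"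
      using aa_min[OF assms, of "real_of_int a" u] h by (metis of_int_0_le_iff of_int_add)
    thus ?thesis by simp
  qed
  moreover have "a \<le> aa j u" using h aa_nonneg[of j u] aa_ge[of _ j u] by force
  ultimately show "aa j u = a" by simp
qed

lemma sum_ind_int: "j \<le> n \<Longrightarrow> (\<Sum>i<n. if i < j then (c::int) else 0) = int j * c"
proof -
  assume "j \<le> n"
  have "(\<Sum>i<n. if i < j then c else 0) = sum (\<lambda>_. c) ({..<n} \<inter> {i. i<j}) + sum (\<lambda>_. 0) ({..<n} \<inter> - {i. i<j})"
    by (rule sum.If_cases) simp
  hence "(\<Sum>i<n. if i < j then c else 0) = (\<Sum>i\<in>{..<n} \<inter> {i. i < j}. c)"
    by simp
  also have "{..<n} \<inter> {i. i < j} = {..<j}" using \<open>j \<le> n\<close> by auto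
  finally show ?thesis by simp
qed

lemma alpha_sum:
  assumes m: "m \<ge> 1" and k: "k \<le> n * m"
  shows "(\<Sum>l=1..n. (if j = n \<and> int k - int l * int m = 0 then 1 else 0)) = alpha n m j k"
proof (cases "j = n \<and> 0 < k \<and> m dvd k")
  case True
  then obtain q where q: "k = m * q" by (auto elim: dvdE)
  have q1: "q \<ge> 1" using True q by (cases q) auto
  have qn: "q \<le> n" using k q m by (simp add: mult.commute)
  have "(\<Sum>l=1..n. (if j = n \<and> int k - int l * int m = 0 then 1 else 0)) =
        (\<Sum>l=1..n. (if l = q then 1 else (0::int)))"
  proof (intro sum.cong refl)
    fix l
    have "int k - int l * int m = 0 \<longleftrightarrow> l * m = q * m" using q by (simp add: mult.commute) linarith
    also have "\<dots> \<longleftrightarrow> l = q" using m by simp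
    finally show "(if j = n \<and> int k - int l * int m = 0 then 1 else 0) = (if l = q then 1 else (0::int))"
      using True by simp
  qed
  also have "\<dots> = 1" using q1 qn by (simp add: sum.delta')
  finally show ?thesis using True by (simp add: alpha_def)
next
  case False
  have "(if j = n \<and> int k - int l * int m = 0 then 1 else 0) = (0::int)" if "l \<in> {1..n}" for l
  proof -
    have "\<not> (j = n \<and> int k - int l * int m = 0)"
    proof
      assume h: "j = n \<and> int k - int l * int m = 0"
      hence "int k = int (l * m)" by simp
      hence "k = l * m" by (simp only: of_nat_eq_iff)
      moreover have "l \<ge> 1" using that by simp
      ultimately show False using False h m by auto
    qed
    thus ?thesis by simp
  qed
  hence "(\<Sum>l=1..n. (if j = n \<and> int k - int l * int m = 0 then 1 else 0)) = (0::int)" by simp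
  then show ?thesis using False by (simp add: alpha_def)
qed



theorem proposition4p6:
  fixes n m j k :: nat
  assumes "n \<ge> 1" and "m \<ge> 1" and "1 \<le> j" and "j \<le> n" and "k \<le> n * m"
  shows "int (W_Delta n j m k) =
           binom (int n - 1 + int k) (int n - 1)
         + (\<Sum>s=1..j. beta n j s *
              (\<Sum>l=1..n. binom (int k - int l * int m + (int n - int j - 1)) (int n - int s - 1)))
         + alpha n m j k"
proof -
  note n = assms(1) and m = assms(2) and j = assms(3,4) and k = assms(5)
  define P where "P u \<longleftrightarrow> (\<forall>i\<ge>n. u i = 0) \<and> (\<forall>i. j \<le> i \<and> i < n \<longrightarrow> 0 \<le> u i) \<and>
      (\<Sum>i<n. u i) + int (m + j) * aa j u = int k" for u :: "nat \<Rightarrow> int"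
  define V where "V a = {u. P u \<and> aa j u = int a}" for a :: nat
  have S: "{u :: nat \<Rightarrow> int. (\<forall>i\<ge>n. u i = 0) \<and> has_weight n j m (\<lambda>i. of_int (u i)) (real k / real m)}
     = {u. P u}"
    using hw_iff[OF m j] unfolding P_def by blast
  have bound: "aa j u \<le> int n" if "P u" for u
  proof -
    have "(\<Sum>i<n. if i < j then - aa j u else 0) \<le> (\<Sum>i<n. u i)"
    proof (intro sum_mono)
      fix i assume "i \<in> {..<n}"
      thus "(if i < j then - aa j u else 0) \<le> u i" using that aa_ge[of i j u] unfolding P_def by auto
    qed
    hence "- (int j * aa j u) \<le> (\<Sum>i<n. u i)" using sum_ind_int[OF j(2), of "- aa j u"] by simp
    hence "int m * aa j u \<le> int k" using that unfolding P_def by (simp add: algebra_simps)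
    also have "\<dots> \<le> int m * int n" using k by (metis mult.commute of_nat_le_iff of_nat_mult)
    finally show ?thesis using m by simp
  qed
  have U: "{u. P u} = (\<Union>a\<in>{0..n}. V a)"
  proof
    show "{u. P u} \<subseteq> (\<Union>a\<in>{0..n}. V a)"
    proof
      fix u assume "u \<in> {u. P u}"
      hence Pu: "P u" by simp
      have "nat (aa j u) \<in> {0..n}" using bound[OF Pu] by simp
      moreover have "u \<in> V (nat (aa j u))" using Pu aa_nonneg[of j u] by (simp add: V_def)
      ultimately show "u \<in> (\<Union>a\<in>{0..n}. V a)" by blast
    qed
  qed (auto simp: V_def)
  define T where "T a = int k - int a * int m" for a :: nat
  have V0: "V 0 = iset {..<n} (\<lambda>_. 0) (int k)"
  proof -
    have "P u \<and> aa j u = 0 \<longleftrightarrow> u \<in> iset {..<n} (\<lambda>_. 0) (int k)" for u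
    proof -
      have "aa j u = 0 \<longleftrightarrow> (\<forall>i<j. u i \<ge> 0)" using aa_eq_iff[OF j(1), of u 0] by simp
      thus ?thesis unfolding P_def iset_def using j(2) by (auto; meson not_le)
    qed
    thus ?thesis unfolding V_def by auto
  qed
  have cV0: "finite (V 0) \<and> int (card (V 0)) = binom (int n - 1 + int k) (int n - 1)"
  proof -
    have "0 \<in> {..<n}" using n by simp
    hence "{..<n} \<noteq> {}" by blast
    from iset_count[OF finite_lessThan this, of "\<lambda>_. 0" "int k"]
    show ?thesis unfolding V0 by (simp add: algebra_simps)
  qed
  define loA where "loA a i = (if i < j then - int a else 0)" for a :: nat and i
  define loB where "loB a i = (if i < j then 1 - int a else 0)" for a :: nat and i
  define tA where "tA a = int k - int (m + j) * int a" for a :: nat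
  have Va: "V a = iset {..<n} (loA a) (tA a) - iset {..<n} (loB a) (tA a)" if a1: "a \<ge> 1" for a
  proof -
    have "P u \<and> aa j u = int a \<longleftrightarrow> u \<in> iset {..<n} (loA a) (tA a) - iset {..<n} (loB a) (tA a)" for u
    proof -
      have e: "aa j u = int a \<longleftrightarrow> (\<forall>i<j. u i + int a \<ge> 0) \<and> (\<exists>i<j. u i = - int a)"
        using aa_eq_iff[OF j(1), of u "int a"] a1 by simp
      show ?thesis
      proof
        assume h: "P u \<and> aa j u = int a"
        hence h1: "\<forall>i<j. u i + int a \<ge> 0" and h2: "\<exists>i<j. u i = - int a" using e by auto
        have "u \<in> iset {..<n} (loA a) (tA a)"
          using h h1 j(2) unfolding P_def iset_def loA_def tA_def by (auto simp: algebra_simps)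
        moreover have "u \<notin> iset {..<n} (loB a) (tA a)"
        proof
          assume "u \<in> iset {..<n} (loB a) (tA a)"
          hence hb: "\<forall>i<n. loB a i \<le> u i" unfolding iset_def by auto
          obtain i where "i < j" "u i = - int a" using h2 by blast
          thus False using hb[rule_format, of i] j(2) unfolding loB_def by auto
        qed
        ultimately show "u \<in> iset {..<n} (loA a) (tA a) - iset {..<n} (loB a) (tA a)" by blast
      next
        assume h: "u \<in> iset {..<n} (loA a) (tA a) - iset {..<n} (loB a) (tA a)"
        hence hA: "(\<forall>i. i \<notin> {..<n} \<longrightarrow> u i = 0) \<and> (\<forall>i\<in>{..<n}. loA a i \<le> u i) \<and> sum u {..<n} = tA a"
          and hB: "\<not> (\<forall>i\<in>{..<n}. loB a i \<le> u i)" unfolding iset_def by auto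
        obtain i where i: "i < n" "u i < loB a i" using hB by auto
        have hAi: "\<forall>i<n. loA a i \<le> u i" using hA by auto
        have ij: "i < j"
        proof (rule ccontr)
          assume "\<not> i < j"
          hence "loB a i = 0" "loA a i = 0" by (simp_all add: loA_def loB_def)
          thus False using i hAi by force
        qed
        have "loA a i \<le> u i" using hAi i by blast
        hence ui: "u i = - int a" using i(2) ij by (simp add: loA_def loB_def)
        have "\<forall>i<j. u i + int a \<ge> 0"
        proof (intro allI impI)
          fix i' assume "i' < j"
          hence "loA a i' \<le> u i'" using hAi j(2) by simp
          thus "u i' + int a \<ge> 0" using \<open>i' < j\<close> by (simp add: loA_def)
        qed
        hence aj: "aa j u = int a" using e ui ij by blast
        have fe: "\<forall>i. j \<le> i \<and> i < n \<longrightarrow> 0 \<le> u i"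
        proof (intro allI impI)
          fix i' assume "j \<le> i' \<and> i' < n"
          hence "loA a i' \<le> u i'" "\<not> i' < j" using hAi by auto
          thus "0 \<le> u i'" by (simp add: loA_def)
        qed
        have "P u" unfolding P_def
        proof (intro conjI)
          show "\<forall>i\<ge>n. u i = 0" using hA by auto
          show "\<forall>i. j \<le> i \<and> i < n \<longrightarrow> 0 \<le> u i" by (rule fe)
          show "(\<Sum>i<n. u i) + int (m + j) * aa j u = int k" using hA aj unfolding tA_def by simp
        qed
        moreover note aj
        ultimately show "P u \<and> aa j u = int a" by simp
      qed
    qed
    thus ?thesis unfolding V_def by auto
  qed
  have sA: "sum (loA a) {..<n} = - (int j * int a)" for a
    unfolding loA_def using sum_ind_int[OF j(2), of "- int a"] by simp
  have sB: "sum (loB a) {..<n} = int j * (1 - int a)" for a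
    unfolding loB_def using sum_ind_int[OF j(2), of "1 - int a"] by simp
  have cVa: "finite (V a) \<and> int (card (V a)) =
      (\<Sum>s=1..j. beta n j s * binom (T a + (int n - int j - 1)) (int n - int s - 1))
      + (if j = n \<and> T a = 0 then 1 else 0)" if a1: "a \<ge> 1" for a
  proof -
    have "0 \<in> {..<n}" using n by simp
    hence nI: "{..<n} \<noteq> {}" by blast
    have cA: "finite (iset {..<n} (loA a) (tA a)) \<and> int (card (iset {..<n} (loA a) (tA a)))
        = binom (T a + int n - 1) (int n - 1)"
      using iset_count[OF finite_lessThan nI, of "loA a" "tA a"] unfolding sA tA_def T_def
      by (simp add: algebra_simps)
    have cB: "finite (iset {..<n} (loB a) (tA a)) \<and> int (card (iset {..<n} (loB a) (tA a)))
        = binom (T a - int j + int n - 1) (int n - 1)"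
      using iset_count[OF finite_lessThan nI, of "loB a" "tA a"] unfolding sB tA_def T_def
      by (simp add: algebra_simps)
    have lo: "loA a i \<le> loB a i" for i by (simp add: loA_def loB_def)
    have sub: "iset {..<n} (loB a) (tA a) \<subseteq> iset {..<n} (loA a) (tA a)"
      unfolding iset_def using lo order_trans by blast
    have le: "card (iset {..<n} (loB a) (tA a)) \<le> card (iset {..<n} (loA a) (tA a))"
      using card_mono[OF _ sub] cA by blast
    have "int (card (V a)) = int (card (iset {..<n} (loA a) (tA a))) - int (card (iset {..<n} (loB a) (tA a)))"
      unfolding Va[OF a1] using card_Diff_subset[OF _ sub] cB le by (simp add: of_nat_diff)
    also have "\<dots> = binom (T a + int n - 1) (int n - 1) - binom (T a - int j + int n - 1) (int n - 1)"
      using cA cB by simp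
    also have "\<dots> = (\<Sum>s=1..j. beta n j s * binom (T a + (int n - int j - 1)) (int n - int s - 1))
      + (if j = n \<and> T a = 0 then 1 else 0)" by (rule ident[OF n j])
    finally show ?thesis unfolding Va[OF a1] using cA by simp
  qed
  have fin: "\<forall>a\<in>{0..n}. finite (V a)"
  proof
    fix a :: nat assume "a \<in> {0..n}"
    show "finite (V a)"
    proof (cases "a = 0")
      case True thus ?thesis using cV0 by simp
    next
      case False hence "a \<ge> 1" by simp
      thus ?thesis using cVa by blast
    qed
  qed
  have disj: "\<forall>a\<in>{0..n}. \<forall>b\<in>{0..n}. a \<noteq> b \<longrightarrow> V a \<inter> V b = {}" unfolding V_def by auto
  have "int (W_Delta n j m k) = int (card (\<Union>a\<in>{0..n}. V a))"
    unfolding W_Delta_def S U ..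
  also have "\<dots> = (\<Sum>a\<in>{0..n}. int (card (V a)))"
    using card_UN_disjoint[OF finite_atLeastAtMost fin disj] by (simp add: of_nat_sum)
  also have "\<dots> = int (card (V 0)) + (\<Sum>a=1..n. int (card (V a)))"
  proof -
    have "{0..n} = insert 0 {1..n}" by auto
    thus ?thesis by simp
  qed
  also have "(\<Sum>a=1..n. int (card (V a))) = (\<Sum>a=1..n.
      (\<Sum>s=1..j. beta n j s * binom (T a + (int n - int j - 1)) (int n - int s - 1))
      + (if j = n \<and> T a = 0 then 1 else 0))"
    using cVa by (intro sum.cong) auto
  also have "\<dots> = (\<Sum>s=1..j. beta n j s *
              (\<Sum>l=1..n. binom (int k - int l * int m + (int n - int j - 1)) (int n - int s - 1)))
         + alpha n m j k"
  proof -
    have a: "(\<Sum>a=1..n. (if j = n \<and> T a = 0 then 1 else 0)) = alpha n m j k"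
      unfolding T_def by (rule alpha_sum[OF m k])
    have b: "(\<Sum>a=1..n. (\<Sum>s=1..j. beta n j s * binom (T a + (int n - int j - 1)) (int n - int s - 1)))
       = (\<Sum>s=1..j. (\<Sum>a=1..n. beta n j s * binom (T a + (int n - int j - 1)) (int n - int s - 1)))"
      by (rule sum.swap)
    also have "\<dots> = (\<Sum>s=1..j. beta n j s *
              (\<Sum>l=1..n. binom (int k - int l * int m + (int n - int j - 1)) (int n - int s - 1)))"
      unfolding T_def by (simp add: sum_distrib_left)
    finally show ?thesis using a by (simp add: sum.distrib)
  qed
  finally show ?thesis using cV0 by simp
qed


end
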